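(* For all integers $n \ge 3$ and all $r \in \{0,1,2\}$, \[\mathrm{size}(\mathrm{MOD}_n^{3,r}) \le 3n-5-[(n+r) \equiv 0 \bmod 3]\,,\] where $[S]$ denotes $1$ if the statement $S$ is true and $0$ otherwise.
   Context: A Boolean straight line program of size $s$ on input variables $x_1,\dots,x_n$ is a sequence of $s$ instructions, each of the form $g \gets h \circ k$ where $\circ$ is an arbitrary binary Boolean operation (any of the 16 functions $\{0,1\}^2\to\{0,1\}$) and each operand $h,k$ is either an input variable or the result of an earlier instruction; designated instructions are outputs, and the program computes a function in the natural way (equivalently, a Boolean circuit with fan-in-two gates over the full binary basis). For a Boolean function $f$, $\mathrm{size}(f)$ is the minimum size of a straight line program computing $f$. For integers $m\ge 2$ and $r$, $\mathrm{MOD}_n^{m,r}\colon\{0,1\}^n\to\{0,1\}$ is defined by $\mathrm{MOD}_n^{m,r}(x_1,\dots,x_n)=1$ if $x_1+\dots+x_n \equiv r \pmod m$ and $0$ otherwise. *)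

theory Defs
  imports Main
begin

text \<open>Boolean straight line programs over the full binary basis.
  An operand is either an input variable x_i (i < n) or the result of an
  earlier instruction (referred to by its index in the program).\<close>

datatype operand = Inp nat | Gate nat

type_synonym instr = "(bool \<Rightarrow> bool \<Rightarrow> bool) \<times> operand \<times> operand"

fun operand_ok :: "nat \<Rightarrow> nat \<Rightarrow> operand \<Rightarrow> bool" where
  "operand_ok n j (Inp i) = (i < n)"
| "operand_ok n j (Gate g) = (g < j)"

definition slp_wf :: "nat \<Rightarrow> instr list \<Rightarrow> bool" where
  "slp_wf n P \<longleftrightarrow> (\<forall>j < length P. case P ! j of (f, h, k) \<Rightarrow>
      operand_ok n j h \<and> operand_ok n j k)"

fun opval :: "(nat \<Rightarrow> bool) \<Rightarrow> bool list \<Rightarrow> operand \<Rightarrow> bool" where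
  "opval x vs (Inp i) = x i"
| "opval x vs (Gate g) = vs ! g"

fun slp_vals_aux :: "(nat \<Rightarrow> bool) \<Rightarrow> bool list \<Rightarrow> instr list \<Rightarrow> bool list" where
  "slp_vals_aux x vs [] = vs"
| "slp_vals_aux x vs ((f, h, k) # P) = slp_vals_aux x (vs @ [f (opval x vs h) (opval x vs k)]) P"

definition slp_vals :: "(nat \<Rightarrow> bool) \<Rightarrow> instr list \<Rightarrow> bool list" where
  "slp_vals x P = slp_vals_aux x [] P"

text \<open>Program P with designated output o computes the n-ary Boolean function F
  (inputs given as x :: nat => bool, only x_0..x_(n-1) relevant).\<close>
definition slp_computes :: "nat \<Rightarrow> instr list \<Rightarrow> operand \<Rightarrow> ((nat \<Rightarrow> bool) \<Rightarrow> bool) \<Rightarrow> bool" where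
  "slp_computes n P out F \<longleftrightarrow> slp_wf n P \<and> operand_ok n (length P) out \<and>
     (\<forall>x. opval x (slp_vals x P) out = F x)"

definition slp_size :: "nat \<Rightarrow> ((nat \<Rightarrow> bool) \<Rightarrow> bool) \<Rightarrow> nat" where
  "slp_size n F = (LEAST s. \<exists>P out. length P = s \<and> slp_computes n P out F)"

text \<open>MOD_n^{m,r}(x_1..x_n) = 1 iff x_1 + ... + x_n = r (mod m); inputs indexed 0..n-1.\<close>
definition MOD_fun :: "nat \<Rightarrow> nat \<Rightarrow> nat \<Rightarrow> (nat \<Rightarrow> bool) \<Rightarrow> bool" where
  "MOD_fun n m r x \<longleftrightarrow> card {i. i < n \<and> x i} mod m = r mod m"

end

theory Submission
  imports Defs
begin

definition valb :: "bool \<Rightarrow> bool \<Rightarrow> nat" where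
  "valb a b = (if b then (if a then 2 else 1) else 0)"

definition cnt :: "(nat \<Rightarrow> bool) \<Rightarrow> nat \<Rightarrow> nat" where
  "cnt x k = (\<Sum>j<k. of_bool (x j))"

fun steps :: "nat \<Rightarrow> nat \<Rightarrow> nat \<Rightarrow> instr list" where
  "steps L i 0 = []"
| "steps L i (Suc m) = [((\<noteq>), Gate (L-2), Inp i), ((\<noteq>), Gate (L-1), Inp i),
      (\<lambda>p q. \<not> (p \<and> q), Gate (L-1), Gate L)] @ steps (L+3) (Suc i) m"

lemma aux_append: "slp_vals_aux x vs (P @ Q) = slp_vals_aux x (slp_vals_aux x vs P) Q"
  by (induction x vs P rule: slp_vals_aux.induct) auto

lemma aux_length: "length (slp_vals_aux x vs P) = length vs + length P"
  by (induction x vs P rule: slp_vals_aux.induct) auto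

lemma aux_nth: "i < length vs \<Longrightarrow> slp_vals_aux x vs P ! i = vs ! i"
  by (induction x vs P rule: slp_vals_aux.induct) (auto simp: nth_append)

lemma step_val: "valb (b \<noteq> x) (\<not> (b \<and> (a \<noteq> x))) = (valb a b + of_bool x + 1) mod 3"
  by (cases a; cases b; cases x) (auto simp: valb_def)

lemma steps_sem:
  "length vs = L \<Longrightarrow> 2 \<le> L \<Longrightarrow>
   length (slp_vals_aux x vs (steps L i m)) = L + 3*m \<and>
   valb (slp_vals_aux x vs (steps L i m) ! (L+3*m-2)) (slp_vals_aux x vs (steps L i m) ! (L+3*m-1))
     = (valb (vs!(L-2)) (vs!(L-1)) + (\<Sum>j<m. of_bool (x (i+j))) + m) mod 3"
proof (induction m arbitrary: L i vs)
  case 0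
  then show ?case by (simp add: valb_def)
next
  case (Suc m)
  define g0 where "g0 = (vs!(L-2) \<noteq> x i)"
  define g1 where "g1 = (vs!(L-1) \<noteq> x i)"
  define g2 where "g2 = (\<not> (vs!(L-1) \<and> g0))"
  have e: "slp_vals_aux x vs (steps L i (Suc m)) = slp_vals_aux x (vs @ [g0, g1, g2]) (steps (L+3) (Suc i) m)"
    using Suc.prems by (simp add: aux_append g0_def g1_def g2_def nth_append)
  have IH: "length (slp_vals_aux x (vs @ [g0, g1, g2]) (steps (L+3) (Suc i) m)) = L + 3 + 3*m \<and>
   valb (slp_vals_aux x (vs @ [g0, g1, g2]) (steps (L+3) (Suc i) m) ! (L+3+3*m-2))
        (slp_vals_aux x (vs @ [g0, g1, g2]) (steps (L+3) (Suc i) m) ! (L+3+3*m-1))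
     = (valb g1 g2 + (\<Sum>j<m. of_bool (x (Suc i+j))) + m) mod 3"
    using Suc.IH[of "vs @ [g0, g1, g2]" "L+3" "Suc i"] Suc.prems by (simp add: nth_append)
  have v: "valb g1 g2 = (valb (vs!(L-2)) (vs!(L-1)) + of_bool (x i) + 1) mod 3"
    unfolding g0_def g1_def g2_def by (rule step_val)
  have s: "(\<Sum>j<Suc m. of_bool (x (i+j))::nat) = of_bool (x i) + (\<Sum>j<m. of_bool (x (Suc i+j)))"
    unfolding sum.lessThan_Suc_shift by (simp only: add_0_right add_Suc_right add_Suc)
  have ar: "\<And>A b T::nat. ((A + b + 1) mod 3 + T + m) mod 3 = (A + (b + T) + Suc m) mod 3"
    by (metis (no_types, lifting) add.assoc add.commute add_Suc_right mod_add_left_eq plus_1_eq_Suc)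
  show ?case using IH unfolding e s v ar
    by (simp add: ar)
qed

definition wf_from :: "nat \<Rightarrow> nat \<Rightarrow> instr list \<Rightarrow> bool" where
  "wf_from n L P \<longleftrightarrow> (\<forall>j < length P. case P ! j of (f, h, k) \<Rightarrow>
      operand_ok n (L+j) h \<and> operand_ok n (L+j) k)"

lemma wf_from_Nil[simp]: "wf_from n L []"
  by (simp add: wf_from_def)

lemma wf_from_Cons[simp]: "wf_from n L ((f,h,k) # P) \<longleftrightarrow>
   operand_ok n L h \<and> operand_ok n L k \<and> wf_from n (Suc L) P"
  unfolding wf_from_def
  by (auto simp: less_Suc_eq_0_disj)

lemma wf_from_append[simp]: "wf_from n L (P @ Q) \<longleftrightarrow> wf_from n L P \<and> wf_from n (L + length P) Q"
  by (induction P arbitrary: L) (auto simp: add_Suc_right)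

lemma slp_wf_from: "slp_wf n P = wf_from n 0 P"
  by (simp add: slp_wf_def wf_from_def)

lemma steps_wf: "2 \<le> L \<Longrightarrow> i + m \<le> n \<Longrightarrow> wf_from n L (steps L i m)"
proof (induction m arbitrary: L i)
  case 0 then show ?case by simp
next
  case (Suc m)
  have "wf_from n (L+3) (steps (L+3) (Suc i) m)" using Suc by simp
  then show ?case using Suc.prems by (simp add: numeral_3_eq_3; linarith)
qed

lemma steps_length: "length (steps L i m) = 3 * m"
  by (induction m arbitrary: L i) auto

lemma cnt_Suc: "cnt x (Suc k) = cnt x k + of_bool (x k)"
  by (simp add: cnt_def)

lemma cnt_split: "cnt x (k + m) = cnt x k + (\<Sum>j<m. of_bool (x (k+j)))"
  by (induction m) (auto simp: cnt_def)

lemma fin_val: "(b \<and> (a \<noteq> x)) = ((valb a b + of_bool x) mod 3 = 2)"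
  by (cases a; cases b; cases x) (auto simp: valb_def)

lemma main:
  assumes wf: "slp_wf n I" and len: "length I = L" and L2: "2 \<le> L" and nk: "k + m + 1 = n"
    and iv: "\<And>x. valb (slp_vals x I ! (L-2)) (slp_vals x I ! (L-1)) = (c + cnt x k) mod 3"
  shows "slp_computes n (I @ steps L k m @ [((\<noteq>), Gate (L+3*m-2), Inp (n-1)),
            ((\<and>), Gate (L+3*m-1), Gate (L+3*m))]) (Gate (L+3*m+1))
          (\<lambda>x. (c + cnt x n + m) mod 3 = 2)"
proof -
  have wfP: "slp_wf n (I @ steps L k m @ [((\<noteq>), Gate (L+3*m-2), Inp (n-1)),
            ((\<and>), Gate (L+3*m-1), Gate (L+3*m))])"
    using wf L2 nk steps_wf[of L k m n] unfolding slp_wf_from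
    by (simp add: len steps_length)
  have val: "opval x (slp_vals x (I @ steps L k m @ [((\<noteq>), Gate (L+3*m-2), Inp (n-1)),
            ((\<and>), Gate (L+3*m-1), Gate (L+3*m))])) (Gate (L+3*m+1)) = ((c + cnt x n + m) mod 3 = 2)" for x
  proof -
    define V where "V = slp_vals x I"
    have lV: "length V = L" using len by (simp add: V_def slp_vals_def aux_length)
    define W where "W = slp_vals_aux x V (steps L k m)"
    have SW: "length W = L + 3*m \<and> valb (W ! (L+3*m-2)) (W ! (L+3*m-1))
       = (valb (V!(L-2)) (V!(L-1)) + (\<Sum>j<m. of_bool (x (k+j))) + m) mod 3"
      unfolding W_def using steps_sem[OF lV L2] by blast
    have e: "slp_vals x (I @ steps L k m @ [((\<noteq>), Gate (L+3*m-2), Inp (n-1)),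
            ((\<and>), Gate (L+3*m-1), Gate (L+3*m))]) =
       W @ [W ! (L+3*m-2) \<noteq> x (n-1), W ! (L+3*m-1) \<and> (W ! (L+3*m-2) \<noteq> x (n-1))]"
      using SW L2 by (simp add: slp_vals_def aux_append W_def V_def nth_append)
    have cn: "cnt x n = cnt x k + (\<Sum>j<m. of_bool (x (k+j))) + of_bool (x (n-1))"
      using nk cnt_split[of x k m] cnt_Suc[of x "k+m"] by auto
    have ar: "\<And>A B C D::nat. (((c + A) mod 3 + B + m) mod 3 + D) mod 3 = (c + (A + B + D) + m) mod 3"
      by (metis (no_types, lifting) add.assoc add.commute mod_add_left_eq)
    have "opval x (W @ [W ! (L+3*m-2) \<noteq> x (n-1), W ! (L+3*m-1) \<and> (W ! (L+3*m-2) \<noteq> x (n-1))]) (Gate (L+3*m+1))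
        = (W ! (L+3*m-1) \<and> (W ! (L+3*m-2) \<noteq> x (n-1)))"
      using SW by (simp add: nth_append)
    also have "\<dots> = ((valb (W ! (L+3*m-2)) (W ! (L+3*m-1)) + of_bool (x (n-1))) mod 3 = 2)"
      by (rule fin_val)
    also have "\<dots> = ((c + cnt x n + m) mod 3 = 2)"
      using SW iv[of x] unfolding cn V_def[symmetric] by (simp add: ar)
    finally show ?thesis using e by simp
  qed
  show ?thesis unfolding slp_computes_def using wfP val
    by (simp add: len steps_length)
qed


lemma size_le: "slp_computes n P out F \<Longrightarrow> slp_size n F \<le> length P"
  unfolding slp_size_def by (rule Least_le) blast

lemma card_cnt: "card {i. i < n \<and> x i} = cnt x n"
proof -
  have "{i. i < n \<and> x i} = {..<n} \<inter> {j. x j}" by auto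
  then show ?thesis by (simp add: cnt_def)
qed

lemma MOD_cnt: "MOD_fun n 3 r x = (cnt x n mod 3 = r mod 3)"
  by (simp add: MOD_fun_def card_cnt)

lemma modeq: "r \<le> 2 \<Longrightarrow> (c + m + r) mod 3 = 2 \<Longrightarrow> ((c + C + m) mod 3 = 2) = (C mod 3 = r mod (3::nat))"
  by presburger

lemma m32: "(2 + 3*k) mod 3 = (2::nat)"
  using mod_mult_self2[of "2::nat" 3 k] by simp

definition init2 :: "nat \<Rightarrow> instr list" where
  "init2 c = [(\<lambda>p q. (of_bool p + of_bool q + c) mod 3 = (2::nat), Inp 0, Inp 1),
              (\<lambda>p q. (of_bool p + of_bool q + c) mod 3 \<noteq> (0::nat), Inp 0, Inp 1)]"

definition init3 :: "instr list" where
  "init3 = [((\<noteq>), Inp 0, Inp 1), ((\<noteq>), Inp 0, Inp 2), ((=), Inp 1, Gate 1), ((\<or>), Gate 0, Gate 1)]"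

lemma valb_enc: "valb (s mod 3 = 2) (s mod 3 \<noteq> 0) = s mod 3"
  unfolding valb_def by presburger

lemma init2_ok: "2 \<le> n \<Longrightarrow> slp_wf n (init2 c)" 
  by (simp add: slp_wf_from init2_def)

lemma init2_val: "valb (slp_vals x (init2 c) ! (2-2)) (slp_vals x (init2 c) ! (2-1)) = (c + cnt x 2) mod 3"
proof -
  have "cnt x 2 = of_bool (x 0) + of_bool (x 1)" by (simp add: cnt_def numeral_2_eq_2)
  then show ?thesis
    using valb_enc[of "of_bool (x 0) + of_bool (x 1) + c"]
    by (simp add: init2_def slp_vals_def add.commute add.left_commute)
qed

lemma init3_ok: "3 \<le> n \<Longrightarrow> slp_wf n init3"
  by (simp add: slp_wf_from init3_def)

lemma init3_val: "valb (slp_vals x init3 ! (4-2)) (slp_vals x init3 ! (4-1)) = (0 + cnt x 3) mod 3"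
proof -
  have "cnt x 3 = of_bool (x 0) + of_bool (x 1) + of_bool (x 2)" by (simp add: cnt_def numeral_3_eq_3 numeral_2_eq_2)
  then show ?thesis
    by (cases "x 0"; cases "x 1"; cases "x 2") (simp_all add: init3_def slp_vals_def valb_def)
qed

theorem theorem1:
  fixes n r :: nat
  assumes "n \<ge> 3" and "r \<le> 2"
  shows "slp_size n (MOD_fun n 3 r) \<le> 3 * n - 5 - (if (n + r) mod 3 = 0 then 1 else 0)"
proof (cases "(n + r) mod 3 = 0")
  case True
  show ?thesis
  proof (cases "n = 3")
    case n3: True
    then have r0: "r = 0" using True assms by presburger
    define P where "P = [((\<noteq>),Inp 0,Inp 1), ((\<noteq>), Inp 1, Inp 2), (\<lambda>p q. \<not>p \<and> \<not>q, Gate 0, Gate 1)]"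
    have "slp_computes n P (Gate 2) (MOD_fun n 3 r)"
    proof -
      have "\<And>x. cnt x 3 = of_bool (x 0) + of_bool (x 1) + of_bool (x 2)"
        by (simp add: cnt_def numeral_3_eq_3 numeral_2_eq_2)
      then have "\<And>x. opval x (slp_vals x P) (Gate 2) = MOD_fun n 3 r x"
        unfolding MOD_cnt n3 r0
        by (simp add: P_def slp_vals_def)
      then show ?thesis unfolding slp_computes_def by (simp add: P_def slp_wf_from n3)
    qed
    from size_le[OF this] show ?thesis using True n3 by (simp add: P_def)
  next
    case False
    with assms have n4: "n \<ge> 4" by simp
    have l3: "length init3 = 4" by (simp add: init3_def)
    have c: "slp_computes n (init3 @ steps 4 3 (n-4) @ [((\<noteq>), Gate (4+3*(n-4)-2), Inp (n-1)),
            ((\<and>), Gate (4+3*(n-4)-1), Gate (4+3*(n-4)))]) (Gate (4+3*(n-4)+1))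
          (\<lambda>x. (0 + cnt x n + (n-4)) mod 3 = 2)"
      by (rule main[OF init3_ok l3 _ _ init3_val]) (use n4 in auto)
    have f: "(\<lambda>x. (0 + cnt x n + (n-4)) mod 3 = 2) = MOD_fun n 3 r"
    proof
      fix x
      have "3 dvd n + r" using True by (simp add: dvd_eq_mod_eq_0)
      then obtain q where q: "n + r = 3*q" by (auto elim: dvdE)
      have "n - 4 + r = 2 + 3*(q-2)" using q n4 by arith
      then have "(0 + (n-4) + r) mod 3 = 2" by (simp only: add_0 m32)
      from modeq[OF assms(2) this] show "((0 + cnt x n + (n-4)) mod 3 = 2) = MOD_fun n 3 r x"
        by (simp add: MOD_cnt)
    qed
    from size_le[OF c[unfolded f]] show ?thesis using True n4
      by (simp add: l3 steps_length)
  qed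
next
  case False
  define c where "c = (2 + 2*n + 2*r) mod 3"
  have l2: "length (init2 c) = 2" by (simp add: init2_def)
  have cc: "slp_computes n (init2 c @ steps 2 2 (n-3) @ [((\<noteq>), Gate (2+3*(n-3)-2), Inp (n-1)),
            ((\<and>), Gate (2+3*(n-3)-1), Gate (2+3*(n-3)))]) (Gate (2+3*(n-3)+1))
          (\<lambda>x. (c + cnt x n + (n-3)) mod 3 = 2)"
    by (rule main[OF init2_ok l2 _ _ init2_val]) (use assms in auto)
  have f: "(\<lambda>x. (c + cnt x n + (n-3)) mod 3 = 2) = MOD_fun n 3 r"
  proof
    fix x
    have e1: "c + (n-3) + r + 3 = c + n + r" using assms by simp
    have "(c + n + r) mod 3 = ((2 + 2*n + 2*r) mod 3 + (n + r)) mod 3" by (simp add: c_def add.assoc)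
    also have "\<dots> = (2 + 2*n + 2*r + (n + r)) mod 3" by (rule mod_add_left_eq)
    also have "\<dots> = (2 + 3*(n + r)) mod 3"
      by (rule arg_cong[where f="\<lambda>t. t mod 3"]) simp
    also have "\<dots> = 2" by (rule m32)
    finally have "(c + (n-3) + r + 3) mod 3 = 2" using e1 by simp
    then have "(c + (n-3) + r) mod 3 = 2" by simp
    from modeq[OF assms(2) this] show "((c + cnt x n + (n-3)) mod 3 = 2) = MOD_fun n 3 r x"
      by (simp add: MOD_cnt)
  qed
  from size_le[OF cc[unfolded f]] show ?thesis using False assms
    by (simp add: l2 steps_length)
qed

end
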